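(* Let $G$ be a group, $g,h\in G$, and $k=\min\{|G:C_G(g)|,|G:C_G(h)|\}$, assumed finite. If the set $\{x\in G:[g,h^x]=1\}$ is $k$-large in $G$, then every element of the conjugacy class $g^G$ commutes with every element of the conjugacy class $h^G$.
   Context: $[a,b]=a^{-1}b^{-1}ab$, $a^x=x^{-1}ax$. A subset $X\subseteq G$ is $k$-large in $G$ if the intersection of any $k$ left translates $a_1X\cap\dots\cap a_kX$ ($a_i\in G$) is non-empty. *)

theory Defs
  imports "HOL-Algebra.Coset"
begin

definition commutator :: "('a, 'b) monoid_scheme \<Rightarrow> 'a \<Rightarrow> 'a \<Rightarrow> 'a" where
  "commutator G a b = inv\<^bsub>G\<^esub> a \<otimes>\<^bsub>G\<^esub> inv\<^bsub>G\<^esub> b \<otimes>\<^bsub>G\<^esub> a \<otimes>\<^bsub>G\<^esub> b"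

definition conj_elem :: "('a, 'b) monoid_scheme \<Rightarrow> 'a \<Rightarrow> 'a \<Rightarrow> 'a" where
  "conj_elem G a x = inv\<^bsub>G\<^esub> x \<otimes>\<^bsub>G\<^esub> a \<otimes>\<^bsub>G\<^esub> x"

definition conj_class :: "('a, 'b) monoid_scheme \<Rightarrow> 'a \<Rightarrow> 'a set" where
  "conj_class G a = {conj_elem G a x | x. x \<in> carrier G}"

definition centralizer :: "('a, 'b) monoid_scheme \<Rightarrow> 'a \<Rightarrow> 'a set" where
  "centralizer G a = {x \<in> carrier G. x \<otimes>\<^bsub>G\<^esub> a = a \<otimes>\<^bsub>G\<^esub> x}"

definition k_large :: "('a, 'b) monoid_scheme \<Rightarrow> nat \<Rightarrow> 'a set \<Rightarrow> bool" where
  "k_large G k X \<longleftrightarrow>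
     (\<forall>a. (\<forall>i<k. a i \<in> carrier G) \<longrightarrow> (\<exists>y. \<forall>i<k. y \<in> a i <#\<^bsub>G\<^esub> X))"

end

theory Submission
  imports Defs
begin

lemma cover_lemma:
  fixes G (structure)
  assumes "group G" "\<one>\<^bsub>G\<^esub> \<in> H" "H \<subseteq> carrier G" "finite (rcosets\<^bsub>G\<^esub> H)"
  shows "\<exists>r. (\<forall>i<card (rcosets\<^bsub>G\<^esub> H). r i \<in> carrier G) \<and>
     (\<forall>x\<in>carrier G. \<exists>j<card (rcosets\<^bsub>G\<^esub> H). \<exists>c\<in>H. x = c \<otimes>\<^bsub>G\<^esub> r j)"
proof -
  interpret group G by fact
  obtain f where f: "bij_betw f {0..<card (rcosets H)} (rcosets H)"
    using ex_bij_betw_nat_finite[OF assms(4)] by blast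
  define r where "r i = (SOME a. a \<in> carrier G \<and> f i = H #> a)" for i
  have r: "r i \<in> carrier G \<and> f i = H #> r i" if "i < card (rcosets H)" for i
  proof -
    have "f i \<in> rcosets H" using f that by (auto simp: bij_betw_def)
    then have "\<exists>a. a \<in> carrier G \<and> f i = H #> a" unfolding RCOSETS_def by blast
    then show ?thesis unfolding r_def by (rule someI_ex)
  qed
  show ?thesis
  proof (rule exI, intro conjI allI impI ballI)
    fix i assume "i < card (rcosets H)" then show "r i \<in> carrier G" using r by blast
  next
    fix x assume x: "x \<in> carrier G"
    have "H #> x \<in> rcosets H" using x unfolding RCOSETS_def by blast
    then have "H #> x \<in> f ` {0..<card (rcosets H)}" using f by (simp add: bij_betw_def)
    then obtain j where j0: "H #> x = f j" "j \<in> {0..<card (rcosets H)}" by (rule imageE)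
    then have j: "j < card (rcosets H)" "f j = H #> x" by auto
    have "x \<in> H #> x" using x assms(2) unfolding r_coset_def by force
    then have "x \<in> H #> r j" using r[OF j(1)] j(2) by simp
    then show "\<exists>j<card (rcosets H). \<exists>c\<in>H. x = c \<otimes> r j"
      using j(1) unfolding r_coset_def by blast
  qed
qed

theorem theorem5p9:
  fixes G (structure) and g h :: 'a and k :: nat
  assumes "group G"
    and "g \<in> carrier G" and "h \<in> carrier G"
    and "finite (rcosets\<^bsub>G\<^esub> (centralizer G g)) \<or> finite (rcosets\<^bsub>G\<^esub> (centralizer G h))"
    and "k = (if \<not> finite (rcosets\<^bsub>G\<^esub> (centralizer G g)) then card (rcosets\<^bsub>G\<^esub> (centralizer G h))
              else if \<not> finite (rcosets\<^bsub>G\<^esub> (centralizer G h)) then card (rcosets\<^bsub>G\<^esub> (centralizer G g))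
              else min (card (rcosets\<^bsub>G\<^esub> (centralizer G g))) (card (rcosets\<^bsub>G\<^esub> (centralizer G h))))"
    and "k_large G k {x \<in> carrier G. commutator G g (conj_elem G h x) = \<one>}"
  shows "\<forall>a \<in> conj_class G g. \<forall>b \<in> conj_class G h. a \<otimes> b = b \<otimes> a"
proof -
  interpret group G by fact
  define X where "X = {x \<in> carrier G. commutator G g (conj_elem G h x) = \<one>}"
  have memX: "x \<in> X \<longleftrightarrow> x \<in> carrier G \<and> g \<otimes> (inv x \<otimes> h \<otimes> x) = (inv x \<otimes> h \<otimes> x) \<otimes> g" for x
  proof -
    have "commutator G g (conj_elem G h x) = \<one> \<longleftrightarrow> g \<otimes> (inv x \<otimes> h \<otimes> x) = (inv x \<otimes> h \<otimes> x) \<otimes> g"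
      if x: "x \<in> carrier G"
    proof -
      let ?u = "inv x \<otimes> h \<otimes> x"
      have u: "?u \<in> carrier G" using x assms by simp
      have "commutator G g ?u = inv (?u \<otimes> g) \<otimes> (g \<otimes> ?u)"
        unfolding commutator_def using u assms by (simp add: inv_mult_group m_assoc)
      also have "\<dots> = \<one> \<longleftrightarrow> g \<otimes> ?u = (?u \<otimes> g) \<otimes> \<one>"
        using u assms by (intro inv_solve_left') auto
      also have "\<dots> \<longleftrightarrow> g \<otimes> ?u = ?u \<otimes> g"
        using u assms by simp
      finally show ?thesis unfolding conj_elem_def .
    qed
    then show ?thesis unfolding X_def by blast
  qed
  have CH: "\<one> \<in> centralizer G h" "centralizer G h \<subseteq> carrier G"
       "\<one> \<in> centralizer G g" "centralizer G g \<subseteq> carrier G"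
    unfolding centralizer_def using assms by auto
  have closeC: "c \<otimes> x \<in> X" if "c \<in> centralizer G h" "x \<in> X" for c x
  proof -
    have c: "c \<in> carrier G" "c \<otimes> h = h \<otimes> c" using that unfolding centralizer_def by auto
    have x: "x \<in> carrier G" using that memX by blast
    have "inv c \<otimes> (h \<otimes> c) = inv c \<otimes> (c \<otimes> h)" using c by simp
    also have "\<dots> = h" using c(1) assms by (simp add: m_assoc[symmetric])
    finally have hc: "inv c \<otimes> (h \<otimes> c) = h" .
    have "inv (c \<otimes> x) \<otimes> h \<otimes> (c \<otimes> x) = inv x \<otimes> (inv c \<otimes> (h \<otimes> c)) \<otimes> x"
      using c x assms by (simp add: inv_mult_group m_assoc)
    also have "\<dots> = inv x \<otimes> h \<otimes> x" using hc by simp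
    finally show ?thesis using that memX c x by auto
  qed
  have closeD: "x \<otimes> d \<in> X" if "d \<in> centralizer G g" "x \<in> X" for d x
  proof -
    have d: "d \<in> carrier G" "d \<otimes> g = g \<otimes> d" using that unfolding centralizer_def by auto
    have x: "x \<in> carrier G" and xc: "g \<otimes> (inv x \<otimes> h \<otimes> x) = (inv x \<otimes> h \<otimes> x) \<otimes> g"
      using that memX by blast+
    let ?u = "inv x \<otimes> h \<otimes> x"
    have u: "?u \<in> carrier G" using x assms by simp
    have e: "inv (x \<otimes> d) \<otimes> h \<otimes> (x \<otimes> d) = inv d \<otimes> ?u \<otimes> d"
      using d x assms by (simp add: inv_mult_group m_assoc)
    have g1: "g \<otimes> inv d = inv d \<otimes> (d \<otimes> g) \<otimes> inv d"
      using d(1) assms by (simp add: m_assoc[symmetric])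
    have g2: "inv d \<otimes> g = inv d \<otimes> (g \<otimes> d) \<otimes> inv d"
      using d(1) assms by (simp add: m_assoc)
    have gd: "g \<otimes> inv d = inv d \<otimes> g" using g1 g2 d(2) by simp
    have "g \<otimes> (inv d \<otimes> ?u \<otimes> d) = (g \<otimes> inv d) \<otimes> ?u \<otimes> d"
      using d(1) u assms by (simp add: m_assoc)
    also have "\<dots> = inv d \<otimes> (g \<otimes> ?u) \<otimes> d"
      unfolding gd using d(1) u assms by (simp add: m_assoc)
    also have "\<dots> = inv d \<otimes> ?u \<otimes> (g \<otimes> d)"
      unfolding xc using d(1) u assms by (simp add: m_assoc)
    also have "\<dots> = (inv d \<otimes> ?u \<otimes> d) \<otimes> g"
      unfolding d(2)[symmetric] using d(1) u assms by (simp add: m_assoc)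
    finally show ?thesis using e memX x d by auto
  qed
  have kl: "\<forall>a. (\<forall>i<k. a i \<in> carrier G) \<longrightarrow> (\<exists>y. \<forall>i<k. y \<in> a i <# X)"
    using assms(6) unfolding k_large_def X_def by blast
  have XG: "carrier G \<subseteq> X"
  proof -
    have caseH: ?thesis if fin: "finite (rcosets (centralizer G h))" and kk: "k = card (rcosets (centralizer G h))"
    proof
      fix z assume z: "z \<in> carrier G"
      obtain r where r: "\<forall>i<k. r i \<in> carrier G"
          "\<forall>x\<in>carrier G. \<exists>j<k. \<exists>c\<in>centralizer G h. x = c \<otimes> r j"
        using cover_lemma[OF assms(1) CH(1,2) fin] kk by blast
      obtain y where y: "\<forall>i<k. y \<in> inv (r i) <# X"
        using kl[rule_format, of "\<lambda>i. inv (r i)"] r(1) by auto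
      have yX: "r i \<otimes> y \<in> X" if ik: "i < k" for i
      proof -
        obtain x where x: "x \<in> X" "y = inv (r i) \<otimes> x" using y ik unfolding l_coset_def by blast
        have "x \<in> carrier G" using x memX by blast
        then have "r i \<otimes> y = x" using x r(1) ik by (simp add: m_assoc[symmetric])
        then show ?thesis using x by simp
      qed
      have yc: "y \<in> carrier G"
      proof -
        have "0 < k" using r(2) z by auto
        then obtain x where x: "x \<in> X" "y = inv (r 0) \<otimes> x" using y unfolding l_coset_def by blast
        then show ?thesis using r(1) \<open>0 < k\<close> memX by auto
      qed
      obtain j c where jc: "j < k" "c \<in> centralizer G h" "z \<otimes> inv y = c \<otimes> r j"
        using r(2) z yc by (meson inv_closed m_closed)
      have "c \<in> carrier G" using jc CH by blast
      have "z = (c \<otimes> r j) \<otimes> y" using jc z yc r(1) \<open>c \<in> carrier G\<close>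
        by (subst inv_solve_right'[symmetric]) auto
      then have "z = c \<otimes> (r j \<otimes> y)" using jc z yc r(1) \<open>c \<in> carrier G\<close>
        by (simp add: m_assoc)
      then show "z \<in> X" using closeC jc yX by simp
    qed
    have caseG: ?thesis if fin: "finite (rcosets (centralizer G g))" and kk: "k = card (rcosets (centralizer G g))"
    proof
      fix z assume z: "z \<in> carrier G"
      obtain r where r: "\<forall>i<k. r i \<in> carrier G"
          "\<forall>x\<in>carrier G. \<exists>j<k. \<exists>c\<in>centralizer G g. x = c \<otimes> r j"
        using cover_lemma[OF assms(1) CH(3,4) fin] kk by blast
      obtain y where y: "\<forall>i<k. y \<in> (inv (r i) \<otimes> inv z) <# X"
        using kl[rule_format, of "\<lambda>i. inv (r i) \<otimes> inv z"] r(1) z by auto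
      have yX: "z \<otimes> r i \<otimes> y \<in> X" if ik: "i < k" for i
      proof -
        obtain x where x: "x \<in> X" "y = (inv (r i) \<otimes> inv z) \<otimes> x" using y ik unfolding l_coset_def by blast
        have "x \<in> carrier G" using x memX by blast
        have ri: "r i \<in> carrier G" using r(1) ik by blast
        have "z \<otimes> r i \<otimes> y = z \<otimes> (r i \<otimes> inv (r i)) \<otimes> inv z \<otimes> x"
          using ri z \<open>x \<in> carrier G\<close> by (simp only: x(2) m_assoc inv_closed m_closed)
        then have "z \<otimes> r i \<otimes> y = x" using ri z \<open>x \<in> carrier G\<close> by simp
        then show ?thesis using x by simp
      qed
      have yc: "y \<in> carrier G"
      proof -
        have "0 < k" using r(2) z by auto
        then obtain x where x: "x \<in> X" "y = (inv (r 0) \<otimes> inv z) \<otimes> x" using y unfolding l_coset_def by blast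
        then show ?thesis using r(1) \<open>0 < k\<close> memX z by auto
      qed
      obtain j d where jd: "j < k" "d \<in> centralizer G g" "inv y = d \<otimes> r j"
        using r(2) yc by (meson inv_closed)
      have dc: "d \<in> carrier G" using jd CH by blast
      have "y = inv (inv y)" using yc by simp
      also have "\<dots> = inv (r j) \<otimes> inv d" using jd dc r(1) yc
        by (simp add: inv_mult_group)
      finally have "y = inv (r j) \<otimes> inv d" .
      moreover have rj: "r j \<in> carrier G" using r(1) jd by blast
      ultimately have "z \<otimes> r j \<otimes> y = z \<otimes> (r j \<otimes> inv (r j)) \<otimes> inv d" using z dc
        by (simp only: m_assoc inv_closed m_closed)
      then have "z \<otimes> r j \<otimes> y = z \<otimes> inv d" using z rj dc by simp
      then have "z \<otimes> inv d \<in> X" using yX[OF jd(1)] by simp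
      moreover have "d \<in> centralizer G g" by fact
      ultimately have "z \<otimes> inv d \<otimes> d \<in> X" by (rule closeD[rotated])
      then show "z \<in> X" using z dc by (simp add: m_assoc)
    qed
    show ?thesis using assms(4,5) caseH caseG
      by (cases "finite (rcosets (centralizer G g))"; cases "finite (rcosets (centralizer G h))")
         (auto simp: min_def split: if_splits)
  qed
  show ?thesis
  proof (intro ballI)
    fix a b assume a: "a \<in> conj_class G g" and b: "b \<in> conj_class G h"
    obtain u where u: "u \<in> carrier G" "a = inv u \<otimes> g \<otimes> u" using a unfolding conj_class_def conj_elem_def by blast
    obtain v where v: "v \<in> carrier G" "b = inv v \<otimes> h \<otimes> v" using b unfolding conj_class_def conj_elem_def by blast
    let ?w = "v \<otimes> inv u"
    have "?w \<in> X" using XG u(1) v(1) by (meson inv_closed m_closed subsetD)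
    then have c: "g \<otimes> (inv ?w \<otimes> h \<otimes> ?w) = (inv ?w \<otimes> h \<otimes> ?w) \<otimes> g" using memX by blast
    have e: "inv ?w \<otimes> h \<otimes> ?w = u \<otimes> b \<otimes> inv u" using u v assms
      by (simp add: inv_mult_group m_assoc)
    have "a \<otimes> b = inv u \<otimes> (g \<otimes> (u \<otimes> b \<otimes> inv u)) \<otimes> u"
      using u v assms by (simp add: m_assoc)
    also have "\<dots> = inv u \<otimes> ((u \<otimes> b \<otimes> inv u) \<otimes> g) \<otimes> u" using c e by simp
    also have "\<dots> = b \<otimes> a"
      using u v assms by (simp add: m_assoc[symmetric])
    finally show "a \<otimes> b = b \<otimes> a" .
  qed
qed

end
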